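(* If $X$ is a compact Alexandroff space, then the number of distinct basic sets in $X$ is at most $\min(X)$.
   Context: A topological space $X$ is an Alexandroff space if arbitrary intersections of open sets are open. In an Alexandroff space, $S(x)$ denotes the minimal open neighborhood of $x$, i.e. the intersection of all open sets containing $x$, which is open. $S(x)$ is called basic if for all $y,z\in X$: whenever $S(x)\subseteq S(y)$ and $S(z)\subseteq S(y)$ then $S(x)\subseteq S(z)$; and whenever $S(x)\not\subseteq S(y)$ then $S(x)\cap S(y)=\emptyset$. A basic set of $X$ is a set of the form $S(x)$ that is basic. For a compact Alexandroff space $X$, $\min(X)$ is the minimum cardinality $|V|$ over all finite covers $V$ of $X$ consisting of sets of the form $S(x)$, $x\in X$. *)

theory Defs
  imports "HOL-Analysis.Analysis"
begin

text \<open>Alexandroff space: arbitrary (nonempty) intersections of open sets are open.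
  The empty intersection is the whole space, which is open anyway.\<close>
definition alexandroff_space :: "'a topology \<Rightarrow> bool" where
  "alexandroff_space X \<longleftrightarrow>
     (\<forall>\<U>. \<U> \<noteq> {} \<and> (\<forall>U\<in>\<U>. openin X U) \<longrightarrow> openin X (\<Inter>\<U>))"

definition minnbhd :: "'a topology \<Rightarrow> 'a \<Rightarrow> 'a set" where
  "minnbhd X x = \<Inter>{U. openin X U \<and> x \<in> U}"

definition is_basic :: "'a topology \<Rightarrow> 'a \<Rightarrow> bool" where
  "is_basic X x \<longleftrightarrow> x \<in> topspace X \<and>
     (\<forall>y\<in>topspace X. \<forall>z\<in>topspace X.
        (minnbhd X x \<subseteq> minnbhd X y \<and> minnbhd X z \<subseteq> minnbhd X y
            \<longrightarrow> minnbhd X x \<subseteq> minnbhd X z) \<and>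
        (\<not> minnbhd X x \<subseteq> minnbhd X y \<longrightarrow> minnbhd X x \<inter> minnbhd X y = {}))"

definition basic_sets :: "'a topology \<Rightarrow> 'a set set" where
  "basic_sets X = {minnbhd X x | x. is_basic X x}"

definition min_cover :: "'a topology \<Rightarrow> nat" where
  "min_cover X = (LEAST n. \<exists>V. finite V \<and> V \<subseteq> minnbhd X ` topspace X
                              \<and> \<Union>V = topspace X \<and> card V = n)"

end

theory Submission
  imports Defs
begin

lemma mn_open:
  assumes "alexandroff_space X" "x \<in> topspace X"
  shows "openin X (minnbhd X x)"
proof -
  have "{U. openin X U \<and> x \<in> U} \<noteq> {}" using assms(2) by auto
  then show ?thesis using assms(1) unfolding alexandroff_space_def minnbhd_def by auto
qed

lemma mn_self: "x \<in> topspace X \<Longrightarrow> x \<in> minnbhd X x"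
  unfolding minnbhd_def by auto

lemma mn_sub_top: "x \<in> topspace X \<Longrightarrow> minnbhd X x \<subseteq> topspace X"
  unfolding minnbhd_def by auto

lemma mn_mono:
  assumes "alexandroff_space X" "y \<in> topspace X" "b \<in> minnbhd X y"
  shows "minnbhd X b \<subseteq> minnbhd X y"
  using mn_open[OF assms(1,2)] assms(3) unfolding minnbhd_def[of X b] by auto

lemma main_bound:
  assumes A: "alexandroff_space X" and V: "finite V" "V \<subseteq> minnbhd X ` topspace X"
    "\<Union>V = topspace X"
  shows "finite (basic_sets X) \<and> card (basic_sets X) \<le> card V"
proof -
  define f where "f B = (SOME U. U \<in> V \<and> B \<subseteq> U)" for B
  have ex: "\<exists>U. U \<in> V \<and> B \<subseteq> U" if hB: "B \<in> basic_sets X" for B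
  proof -
    obtain b where b: "B = minnbhd X b" "is_basic X b" using hB unfolding basic_sets_def by blast
    have bt: "b \<in> topspace X" using b(2) unfolding is_basic_def by auto
    then obtain U where U: "U \<in> V" "b \<in> U" using V(3) by auto
    then obtain y where y: "y \<in> topspace X" "U = minnbhd X y" using V(2) by auto
    show ?thesis using mn_mono[OF A y(1)] U y b by auto
  qed
  have fB: "f B \<in> V \<and> B \<subseteq> f B" if "B \<in> basic_sets X" for B
    unfolding f_def using someI_ex[OF ex[OF that]] .
  have inj: "inj_on f (basic_sets X)"
  proof (rule inj_onI)
    fix B1 B2 assume h: "B1 \<in> basic_sets X" "B2 \<in> basic_sets X" "f B1 = f B2"
    obtain b1 where b1: "B1 = minnbhd X b1" "is_basic X b1" using h(1) unfolding basic_sets_def by blast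
    obtain b2 where b2: "B2 = minnbhd X b2" "is_basic X b2" using h(2) unfolding basic_sets_def by blast
    obtain y where y: "y \<in> topspace X" "f B1 = minnbhd X y" using fB[OF h(1)] V(2) by auto
    have s1: "B1 \<subseteq> minnbhd X y" and s2: "B2 \<subseteq> minnbhd X y" using fB h y by auto
    have t1: "b1 \<in> topspace X" using b1(2) unfolding is_basic_def by auto
    have t2: "b2 \<in> topspace X" using b2(2) unfolding is_basic_def by auto
    have "minnbhd X b1 \<subseteq> minnbhd X b2"
      using b1(2) y(1) t2 s1 s2 b1(1) b2(1) unfolding is_basic_def by (metis (no_types))
    moreover have "minnbhd X b2 \<subseteq> minnbhd X b1"
      using b2(2) y(1) t1 s1 s2 b1(1) b2(1) unfolding is_basic_def by (metis (no_types))
    ultimately show "B1 = B2" using b1(1) b2(1) by auto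
  qed
  have img: "f ` basic_sets X \<subseteq> V" using fB by auto
  have fin: "finite (basic_sets X)" using inj img V(1) by (meson finite_imageD finite_subset)
  moreover have "card (basic_sets X) \<le> card V"
    using card_inj_on_le[OF inj img V(1)] .
  ultimately show ?thesis by auto
qed

theorem theorem17:
  fixes X :: "'a topology"
  assumes "alexandroff_space X" and "compact_space X"
  shows "finite (basic_sets X) \<and> card (basic_sets X) \<le> min_cover X"
proof -
  let ?U = "minnbhd X ` topspace X"
  have "compactin X (topspace X)" using assms(2) compact_space_def by auto
  moreover have "\<forall>B\<in>?U. openin X B" using mn_open[OF assms(1)] by auto
  moreover have "topspace X \<subseteq> \<Union>?U" using mn_self by fastforce
  ultimately have "\<exists>F. finite F \<and> F \<subseteq> ?U \<and> topspace X \<subseteq> \<Union>F"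
    unfolding compactin_def by (elim conjE allE[of _ ?U]) (erule impE, rule conjI)
  then obtain F where F: "finite F" "F \<subseteq> ?U" "topspace X \<subseteq> \<Union>F" by blast
  have "\<forall>S\<in>F. S \<subseteq> topspace X"
  proof
    fix S assume "S \<in> F"
    then obtain x where "x \<in> topspace X" "S = minnbhd X x" using F(2) by blast
    then show "S \<subseteq> topspace X" using mn_sub_top by simp
  qed
  then have "\<Union>F \<subseteq> topspace X" by blast
  with F have ex: "\<exists>V. finite V \<and> V \<subseteq> ?U \<and> \<Union>V = topspace X \<and> card V = card F"
    by (intro exI[of _ F]) auto
  have "\<exists>V. finite V \<and> V \<subseteq> ?U \<and> \<Union>V = topspace X \<and> card V = min_cover X"
    unfolding min_cover_def by (rule LeastI_ex) (rule exI, rule ex)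
  then obtain V where V: "finite V" "V \<subseteq> ?U" "\<Union>V = topspace X" "card V = min_cover X"
    by blast
  show ?thesis using main_bound[OF assms(1) V(1-3)] V(4) by simp
qed

end
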